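(* Let $\mathcal A\in\mathbb R^{n\times n\times l}$, $\mathcal X\in\mathbb R^{n\times p\times l}$, $\mathcal B\in\mathbb R^{p\times p\times l}$ and $\mathcal C\in\mathbb R^{n\times p\times l}$. The analytical solution of the t-Sylvester equation $$\mathcal A*\mathcal X+\mathcal X*\mathcal B=\mathcal C$$ is given by $$\operatorname{vec}(\mathcal X)=\big(\widetilde{\operatorname{bcirc}}(\mathcal B)^\top\otimes I_n+[I_p]_{l\times l}\odot\operatorname{bcirc}(\mathcal A)\big)^{\dagger}\operatorname{vec}(\mathcal C).$$
   Context: Frontal slices $A^{(i)}=\mathcal A(:,:,i)$. $\operatorname{bcirc}(\mathcal A)$ is the block circulant matrix whose $(i,j)$ block is $A^{(((i-j)\bmod l)+1)}$; $\widetilde{\operatorname{bcirc}}(\mathcal B)$ is the block matrix whose $(i,j)$ block is $B^{(((j-i)\bmod l)+1)}$ (first block row $B^{(1)},B^{(2)},\dots,B^{(l)}$). The t-product is $\mathcal A*\mathcal B=\operatorname{fold}(\operatorname{bcirc}(\mathcal A)\operatorname{unfold}(\mathcal B))$, with $\operatorname{unfold}$ stacking frontal slices vertically and $\operatorname{fold}$ its inverse. $\operatorname{vec}(\mathcal C)=\mathcal C(:)$ is the column-major vectorization (columns of $C^{(1)}$, then of $C^{(2)}$, and so on). $[I_p]_{l\times l}$ is the $pl\times pl$ block matrix all of whose $p\times p$ blocks are $I_p$. For block matrices $M=[M_{ij}]$ and $N=[N_{ij}]$, both partitioned into $l\times l$ blocks (here $\operatorname{bcirc}(\mathcal A)$ into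 $n\times n$ blocks), the Khatri–Rao product $M\odot N$ is the block matrix with $(i,j)$ block $M_{ij}\otimes N_{ij}$. $\otimes$ is the Kronecker product and $\dagger$ the Moore–Penrose inverse. *)

theory Defs
  imports "Jordan_Normal_Form.Matrix"
begin

text \<open>Third-order real tensors are represented by the list of their frontal slices
  (slice k of the list is the paper's A^(k+1)); all indices are 0-based.\<close>

type_synonym tensor = "real mat list"

definition is_tensor :: "nat \<Rightarrow> nat \<Rightarrow> nat \<Rightarrow> tensor \<Rightarrow> bool" where
  "is_tensor m k l T \<longleftrightarrow> length T = l \<and> (\<forall>i<l. T ! i \<in> carrier_mat m k)"

definition bcirc :: "tensor \<Rightarrow> real mat" where
  "bcirc A = (let m = dim_row (A ! 0); k = dim_col (A ! 0); l = length A in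
     mat (m * l) (k * l) (\<lambda>(r, c). (A ! ((l + r div m - c div k) mod l)) $$ (r mod m, c mod k)))"

definition bcirc_tilde :: "tensor \<Rightarrow> real mat" where
  "bcirc_tilde B = (let m = dim_row (B ! 0); k = dim_col (B ! 0); l = length B in
     mat (m * l) (k * l) (\<lambda>(r, c). (B ! ((l + c div k - r div m) mod l)) $$ (r mod m, c mod k)))"

definition unfold_t :: "tensor \<Rightarrow> real mat" where
  "unfold_t X = (let m = dim_row (X ! 0); k = dim_col (X ! 0); l = length X in
     mat (m * l) k (\<lambda>(r, c). (X ! (r div m)) $$ (r mod m, c)))"

definition fold_t :: "nat \<Rightarrow> nat \<Rightarrow> real mat \<Rightarrow> tensor" where
  "fold_t m l M = map (\<lambda>t. mat m (dim_col M) (\<lambda>(i, j). M $$ (t * m + i, j))) [0..<l]"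

definition tprod :: "tensor \<Rightarrow> tensor \<Rightarrow> tensor" where
  "tprod A B = fold_t (dim_row (A ! 0)) (length A) (bcirc A * unfold_t B)"

definition tadd :: "tensor \<Rightarrow> tensor \<Rightarrow> tensor" where
  "tadd A B = map2 (+) A B"

text \<open>Column-major vectorization: columns of slice 1, then of slice 2, etc.\<close>
definition tvec :: "tensor \<Rightarrow> real vec" where
  "tvec T = (let m = dim_row (T ! 0); k = dim_col (T ! 0) in
     vec (length T * (m * k))
       (\<lambda>t. (T ! (t div (m * k))) $$ ((t mod (m * k)) mod m, (t mod (m * k)) div m)))"

definition kron :: "real mat \<Rightarrow> real mat \<Rightarrow> real mat" where
  "kron M N = mat (dim_row M * dim_row N) (dim_col M * dim_col N)
     (\<lambda>(r, c). M $$ (r div dim_row N, c div dim_col N) * N $$ (r mod dim_row N, c mod dim_col N))"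

definition block_of :: "nat \<Rightarrow> nat \<Rightarrow> real mat \<Rightarrow> nat \<Rightarrow> nat \<Rightarrow> real mat" where
  "block_of m k M i j = mat m k (\<lambda>(r, c). M $$ (i * m + r, j * k + c))"

definition khatri_rao :: "nat \<Rightarrow> nat \<Rightarrow> nat \<Rightarrow> nat \<Rightarrow> nat \<Rightarrow> real mat \<Rightarrow> real mat \<Rightarrow> real mat" where
  "khatri_rao l m1 k1 m2 k2 M N = mat (l * (m1 * m2)) (l * (k1 * k2))
     (\<lambda>(r, c). kron (block_of m1 k1 M (r div (m1 * m2)) (c div (k1 * k2)))
                    (block_of m2 k2 N (r div (m1 * m2)) (c div (k1 * k2)))
                $$ (r mod (m1 * m2), c mod (k1 * k2)))"

definition ones_block_id :: "nat \<Rightarrow> nat \<Rightarrow> real mat" where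
  "ones_block_id p l = mat (p * l) (p * l) (\<lambda>(r, c). if r mod p = c mod p then 1 else 0)"

definition mp_inverse :: "real mat \<Rightarrow> real mat" where
  "mp_inverse M = (THE X. X \<in> carrier_mat (dim_col M) (dim_row M) \<and>
     M * X * M = M \<and> X * M * X = X \<and>
     transpose_mat (M * X) = M * X \<and> transpose_mat (X * M) = X * M)"

end

theory Submission
  imports Defs "Jordan_Normal_Form.Determinant"
begin


lemma gram_zero:
  fixes N :: "real mat"
  assumes N: "N \<in> carrier_mat m k" and z: "transpose_mat N * N = 0\<^sub>m k k"
  shows "N = 0\<^sub>m m k"
proof (rule eq_matI)
  fix i j assume i: "i < dim_row (0\<^sub>m m k)" and j: "j < dim_col (0\<^sub>m m k)"
  have "(transpose_mat N * N) $$ (j,j) = 0" using z j by simp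
  hence "(\<Sum>t<m. N $$ (t,j) * N $$ (t,j)) = 0"
    using N j by (simp add: scalar_prod_def lessThan_atLeast0 row_transpose)
  hence "\<forall>t\<in>{..<m}. N $$ (t,j) * N $$ (t,j) = 0"
    by (subst sum_nonneg_eq_0_iff[symmetric]) auto
  thus "N $$ (i,j) = 0\<^sub>m m k $$ (i,j)" using i j by auto
qed (use N in auto)

lemma sq_kernel:
  fixes S Z :: "real mat"
  assumes S: "S \<in> carrier_mat k k" and Z: "Z \<in> carrier_mat k q"
    and sym: "transpose_mat S = S" and z: "S * (S * Z) = 0\<^sub>m k q"
  shows "S * Z = 0\<^sub>m k q"
proof -
  have "transpose_mat (S * Z) * (S * Z) = transpose_mat Z * (transpose_mat S * (S * Z))"
    using S Z by (simp add: transpose_mult assoc_mult_mat[of _ q k _ k _ q])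
  also have "\<dots> = 0\<^sub>m q q" using z sym Z by simp
  finally show ?thesis using gram_zero[of "S*Z" k q] S Z by auto
qed

primrec hor :: "nat \<Rightarrow> real mat \<Rightarrow> real list \<Rightarrow> real mat" where
  "hor k S [] = 0\<^sub>m k k"
| "hor k S (c # cs) = c \<cdot>\<^sub>m 1\<^sub>m k + S * hor k S cs"

lemma hor_carrier[simp]: "S \<in> carrier_mat k k \<Longrightarrow> hor k S cs \<in> carrier_mat k k"
  by (induct cs) (simp_all add: add_carrier_mat mult_carrier_mat)

lemma hor_dims[simp]: "S \<in> carrier_mat k k \<Longrightarrow> dim_row (hor k S cs) = k"
  "S \<in> carrier_mat k k \<Longrightarrow> dim_col (hor k S cs) = k"
  by (metis carrier_matD hor_carrier)+

lemma hor_comm: assumes S: "S \<in> carrier_mat k k" shows "S * hor k S cs = hor k S cs * S"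
proof (induct cs)
  case Nil then show ?case using S by simp
next
  case (Cons c cs)
  have H: "hor k S cs \<in> carrier_mat k k" using S by simp
  have "S * hor k S (c # cs) = S * (c \<cdot>\<^sub>m 1\<^sub>m k) + S * (S * hor k S cs)"
    using mult_add_distrib_mat[OF S smult_carrier_mat[OF one_carrier_mat] mult_carrier_mat[OF S H]] by simp
  also have "\<dots> = c \<cdot>\<^sub>m S + S * (S * hor k S cs)"
    using S by (simp add: mult_smult_distrib[OF S one_carrier_mat])
  also have "\<dots> = c \<cdot>\<^sub>m S + S * (hor k S cs * S)" using Cons by simp
  also have "\<dots> = (c \<cdot>\<^sub>m 1\<^sub>m k) * S + (S * hor k S cs) * S"
    using S H by (simp add: mult_smult_assoc_mat[OF one_carrier_mat S] assoc_mult_mat[OF S H S])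
  also have "\<dots> = hor k S (c # cs) * S"
    using add_mult_distrib_mat[OF smult_carrier_mat[OF one_carrier_mat] mult_carrier_mat[OF S H] S]
    by simp
  finally show ?case .
qed

lemma transpose_smult_one[simp]: "transpose_mat (c \<cdot>\<^sub>m 1\<^sub>m k) = (c::real) \<cdot>\<^sub>m 1\<^sub>m k"
  by (intro eq_matI) auto

lemma hor_sym: assumes S: "S \<in> carrier_mat k k" and sym: "transpose_mat S = S"
  shows "transpose_mat (hor k S cs) = hor k S cs"
proof (induct cs)
  case Nil then show ?case by simp
next
  case (Cons c cs)
  have H: "hor k S cs \<in> carrier_mat k k" using S by simp
  have "transpose_mat (hor k S (c # cs)) = c \<cdot>\<^sub>m 1\<^sub>m k + hor k S cs * S"
    using S H Cons sym transpose_add[OF smult_carrier_mat[OF one_carrier_mat] mult_carrier_mat[OF S H]]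
    by (simp add: transpose_mult[OF S H])
  also have "\<dots> = hor k S (c # cs)" using hor_comm[OF S] by simp
  finally show ?case .
qed

lemma hor_zeros: assumes S: "S \<in> carrier_mat k k"
  shows "hor k S (replicate r 0 @ cs) = ((\<lambda>X. S * X) ^^ r) (hor k S cs)"
proof (induct r)
  case 0 then show ?case by simp
next
  case (Suc r)
  have H: "hor k S (replicate r 0 @ cs) \<in> carrier_mat k k" using S by simp
  have "hor k S (replicate (Suc r) 0 @ cs) = 0 \<cdot>\<^sub>m 1\<^sub>m k + S * hor k S (replicate r 0 @ cs)" by simp
  also have "\<dots> = S * hor k S (replicate r 0 @ cs)" using S H by (intro eq_matI) (auto simp del: hor.simps)
  finally show ?case using Suc by simp
qed

lemma funpow_carrier: "S \<in> carrier_mat k k \<Longrightarrow> Y \<in> carrier_mat k q \<Longrightarrow> ((\<lambda>X. S * X) ^^ r) Y \<in> carrier_mat k q"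
  by (induct r) auto

lemma kill_pow:
  fixes S :: "real mat"
  assumes S: "S \<in> carrier_mat k k" and sym: "transpose_mat S = S"
  shows "Y \<in> carrier_mat k k \<Longrightarrow> ((\<lambda>X. S * X) ^^ r) Y = 0\<^sub>m k k \<Longrightarrow> S * Y = 0\<^sub>m k k"
proof (induct r arbitrary: Y)
  case 0 then show ?case using S by simp
next
  case (Suc r)
  have "((\<lambda>X. S * X) ^^ r) (S * Y) = 0\<^sub>m k k" using Suc(3) by (simp add: funpow_Suc_right del: funpow.simps)
  hence "S * (S * Y) = 0\<^sub>m k k" using Suc(1)[of "S * Y"] Suc(2) S by auto
  thus ?case using sq_kernel[OF S Suc(2) sym] by simp
qed

definition pw :: "nat \<Rightarrow> real mat \<Rightarrow> nat \<Rightarrow> real mat" where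
  "pw k S i = ((\<lambda>X. S * X) ^^ i) (1\<^sub>m k)"

lemma pw_carrier[simp]: "S \<in> carrier_mat k k \<Longrightarrow> pw k S i \<in> carrier_mat k k"
  unfolding pw_def by (rule funpow_carrier) auto

lemma pw_dims[simp]: "S \<in> carrier_mat k k \<Longrightarrow> dim_row (pw k S i) = k"
  "S \<in> carrier_mat k k \<Longrightarrow> dim_col (pw k S i) = k"
  by (metis carrier_matD pw_carrier)+

lemma hor_entry: assumes S: "S \<in> carrier_mat k k" and a: "a < k" and b: "b < k"
  shows "hor k S cs $$ (a,b) = (\<Sum>i<length cs. cs ! i * pw k S i $$ (a,b))"
  using a b
proof (induct cs arbitrary: a b)
  case Nil then show ?case by simp
next
  case (Cons c cs)
  have H: "hor k S cs \<in> carrier_mat k k" using S by simp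
  have e: "(S * hor k S cs) $$ (a,b) = (\<Sum>i<length cs. cs ! i * pw k S (Suc i) $$ (a,b))"
  proof -
    have "(S * hor k S cs) $$ (a,b) = (\<Sum>j<k. S $$ (a,j) * hor k S cs $$ (j,b))"
      using S H Cons(2,3) by (simp add: scalar_prod_def lessThan_atLeast0)
    also have "\<dots> = (\<Sum>j<k. S $$ (a,j) * (\<Sum>i<length cs. cs ! i * pw k S i $$ (j,b)))"
      using Cons by (intro sum.cong) auto
    also have "\<dots> = (\<Sum>i<length cs. cs ! i * (\<Sum>j<k. S $$ (a,j) * pw k S i $$ (j,b)))"
      unfolding sum_distrib_left by (subst sum.swap) (simp add: mult_ac)
    also have "\<dots> = (\<Sum>i<length cs. cs ! i * pw k S (Suc i) $$ (a,b))"
    proof (intro sum.cong refl)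
      fix i
      have "pw k S (Suc i) = S * pw k S i" unfolding pw_def by simp
      hence "pw k S (Suc i) $$ (a,b) = (\<Sum>j<k. S $$ (a,j) * pw k S i $$ (j,b))"
        using S Cons(2,3) by (simp add: scalar_prod_def lessThan_atLeast0)
      thus "cs ! i * (\<Sum>j<k. S $$ (a,j) * pw k S i $$ (j,b)) = cs ! i * pw k S (Suc i) $$ (a,b)" by simp
    qed
    finally show ?thesis .
  qed
  have "hor k S (c # cs) $$ (a,b) = c * (1\<^sub>m k) $$ (a,b) + (S * hor k S cs) $$ (a,b)"
    using S H Cons(2,3) by simp
  also have "\<dots> = (\<Sum>i<length (c # cs). (c # cs) ! i * pw k S i $$ (a,b))"
    unfolding e length_Cons sum.lessThan_Suc_shift using Cons(2,3) by (simp add: pw_def)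
  finally show ?case .
qed

lemma exists_annih:
  assumes S: "S \<in> carrier_mat k k"
  shows "\<exists>cs. (\<exists>i<length cs. cs ! i \<noteq> 0) \<and> hor k S cs = 0\<^sub>m k k"
proof -
  define N where "N = k * k"
  define W where "W = mat (Suc N) (Suc N) (\<lambda>(r,c). if r < N then pw k S c $$ (r div k, r mod k) else 0)"
  have Wc: "W \<in> carrier_mat (Suc N) (Suc N)" unfolding W_def by simp
  have Wr: "W = mat\<^sub>r (Suc N) (Suc N) (\<lambda>i. if i = N then 0\<^sub>v (Suc N) else row W i)"
    by (rule eq_matI) (auto simp: W_def)
  have "det W = 0"
    by (subst Wr, rule det_row_0) (auto simp: W_def)
  then obtain v where v: "v \<in> carrier_vec (Suc N)" "v \<noteq> 0\<^sub>v (Suc N)" "W *\<^sub>v v = 0\<^sub>v (Suc N)"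
    using det_0_iff_vec_prod_zero_field[OF Wc] by blast
  define cs where "cs = list_of_vec v"
  have len: "length cs = Suc N" using v unfolding cs_def by simp
  have csi: "\<And>i. i < Suc N \<Longrightarrow> cs ! i = v $ i" using v unfolding cs_def by simp
  have nz: "\<exists>i<length cs. cs ! i \<noteq> 0"
  proof (rule ccontr)
    assume "\<not> ?thesis"
    hence "v = 0\<^sub>v (Suc N)" using len csi v(1) by (intro eq_vecI) auto
    thus False using v(2) by simp
  qed
  have "hor k S cs = 0\<^sub>m k k"
  proof (rule eq_matI)
    fix a b assume a: "a < dim_row (0\<^sub>m k k)" and b: "b < dim_col (0\<^sub>m k k)"
    hence a: "a < k" and b: "b < k" by auto
    have lt: "a * k + b < N" unfolding N_def
    proof -
      have "a * k + b < a * k + k" using b by simp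
      also have "\<dots> = (a + 1) * k" by simp
      also have "\<dots> \<le> k * k" using a by (intro mult_right_mono) auto
      finally show "a * k + b < k * k" .
    qed
    have dv: "(a * k + b) div k = a" "(a * k + b) mod k = b" using a b by auto
    have "hor k S cs $$ (a,b) = (\<Sum>i<Suc N. v $ i * pw k S i $$ (a,b))"
      using hor_entry[OF S a b] len csi by simp
    also have "\<dots> = (W *\<^sub>v v) $ (a * k + b)"
      using lt v(1) dv by (simp add: W_def scalar_prod_def lessThan_atLeast0 mult.commute)
    also have "\<dots> = 0" using v(3) lt by simp
    finally show "hor k S cs $$ (a,b) = 0\<^sub>m k k $$ (a,b)" using a b by simp
  qed (use S in auto)
  thus ?thesis using nz by blast
qed

lemma split_nonzero: "(\<exists>i<length cs. cs ! i \<noteq> (0::real)) \<Longrightarrow> \<exists>r a rest. cs = replicate r 0 @ a # rest \<and> a \<noteq> 0"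
proof (induct cs)
  case Nil then show ?case by simp
next
  case (Cons c cs)
  show ?case
  proof (cases "c = 0")
    case False
    have "c # cs = replicate 0 0 @ c # cs" by simp
    thus ?thesis using False by blast
  next
    case True
    from Cons(2) obtain j where j: "j < Suc (length cs)" "(c # cs) ! j \<noteq> 0" by auto
    with True obtain i where "j = Suc i" by (cases j) auto
    with j have "i < length cs" "cs ! i \<noteq> 0" by auto
    then obtain r a rest where "cs = replicate r 0 @ a # rest" "a \<noteq> 0" using Cons(1) by blast
    thus ?thesis using True by (intro exI[of _ "Suc r"]) auto
  qed
qed

lemma transpose_smult_gen: "transpose_mat (c \<cdot>\<^sub>m A) = c \<cdot>\<^sub>m transpose_mat A"
  by (intro eq_matI) auto

lemma ST_exists:
  fixes S :: "real mat"
  assumes S: "S \<in> carrier_mat k k" and sym: "transpose_mat S = S"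
  shows "\<exists>T \<in> carrier_mat k k. transpose_mat T = T \<and> T * S = S * T \<and> S * (T * S) = S"
proof -
  obtain cs where cs: "\<exists>i<length cs. cs ! i \<noteq> 0" "hor k S cs = 0\<^sub>m k k"
    using exists_annih[OF S] by blast
  obtain r a rest where rar: "cs = replicate r 0 @ a # rest" "a \<noteq> 0"
    using split_nonzero[OF cs(1)] by blast
  define H where "H = hor k S rest"
  have H: "H \<in> carrier_mat k k" unfolding H_def using S by simp
  have "((\<lambda>X. S * X) ^^ r) (hor k S (a # rest)) = 0\<^sub>m k k"
    using hor_zeros[OF S, of r "a # rest"] cs(2) rar(1) by simp
  hence z: "S * hor k S (a # rest) = 0\<^sub>m k k"
    using kill_pow[OF S sym] S by simp
  have hr: "hor k S (a # rest) = a \<cdot>\<^sub>m 1\<^sub>m k + S * H" by (simp add: H_def)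
  have "S * hor k S (a # rest) = S * (a \<cdot>\<^sub>m 1\<^sub>m k) + S * (S * H)"
    unfolding hr using mult_add_distrib_mat[OF S smult_carrier_mat[OF one_carrier_mat] mult_carrier_mat[OF S H]]
    by simp
  also have "\<dots> = a \<cdot>\<^sub>m S + S * (S * H)"
    using S by (simp add: mult_smult_distrib[OF S one_carrier_mat])
  finally have z2: "a \<cdot>\<^sub>m S + S * (S * H) = 0\<^sub>m k k" using z by simp
  have ent: "\<And>i j. i < k \<Longrightarrow> j < k \<Longrightarrow> (S * (S * H)) $$ (i,j) = - a * S $$ (i,j)"
  proof -
    fix i j assume "i < k" "j < k"
    hence "(a \<cdot>\<^sub>m S + S * (S * H)) $$ (i,j) = 0" using z2 by simp
    thus "(S * (S * H)) $$ (i,j) = - a * S $$ (i,j)" using \<open>i < k\<close> \<open>j < k\<close> S H by simp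
  qed
  define T where "T = (- 1 / a) \<cdot>\<^sub>m H"
  have T: "T \<in> carrier_mat k k" unfolding T_def using H by simp
  have TT: "transpose_mat T = T"
    unfolding T_def H_def transpose_smult_gen hor_sym[OF S sym] ..
  have HS: "H * S = S * H" unfolding H_def using hor_comm[OF S] by simp
  have TS: "T * S = S * T"
    unfolding T_def using HS mult_smult_assoc_mat[OF H S] mult_smult_distrib[OF S H] by simp
  have "S * (T * S) = S * (S * T)" using TS by simp
  also have "\<dots> = (- 1 / a) \<cdot>\<^sub>m (S * (S * H))"
    unfolding T_def using mult_smult_distrib[OF S H] mult_smult_distrib[OF S mult_carrier_mat[OF S H]] by simp
  also have "\<dots> = S"
    using ent S H rar(2) by (intro eq_matI) auto
  finally show ?thesis using T TT TS by blast
qed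

lemma penrose_exists:
  fixes M :: "real mat"
  assumes M: "M \<in> carrier_mat m k"
  shows "\<exists>X \<in> carrier_mat k m. M * X * M = M \<and> X * M * X = X \<and>
     transpose_mat (M * X) = M * X \<and> transpose_mat (X * M) = X * M"
proof -
  have Mt: "transpose_mat M \<in> carrier_mat k m" using M by simp
  define S where "S = transpose_mat M * M"
  have S: "S \<in> carrier_mat k k" unfolding S_def using M by simp
  have sym: "transpose_mat S = S" unfolding S_def using transpose_mult[OF Mt M] by simp
  obtain T where T: "T \<in> carrier_mat k k" and TT: "transpose_mat T = T" and TS: "T * S = S * T"
    and STS: "S * (T * S) = S" using ST_exists[OF S sym] by blast
  have a: "\<And>(Z::real mat) q. Z \<in> carrier_mat k q \<Longrightarrow> S * (T * (S * Z)) = S * Z"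
  proof -
    fix Z :: "real mat" and q assume Z: "Z \<in> carrier_mat k q"
    have "S * (T * (S * Z)) = (S * (T * S)) * Z"
      by (simp add: assoc_mult_mat[OF S mult_carrier_mat[OF T S] Z] assoc_mult_mat[OF T S Z])
    thus "S * (T * (S * Z)) = S * Z" using STS by simp
  qed
  define G where "G = T * (S * T)"
  have G: "G \<in> carrier_mat k k" unfolding G_def using S T by simp
  have GT: "transpose_mat G = G"
    unfolding G_def using S T TT sym
    by (simp add: transpose_mult[OF T mult_carrier_mat[OF S T]] transpose_mult[OF S T] assoc_mult_mat[OF T S T])
  have GSe: "G * S = T * (S * (T * S))" unfolding G_def
    using assoc_mult_mat[OF T mult_carrier_mat[OF S T] S] assoc_mult_mat[OF S T S] by simp
  have SGS: "S * (G * S) = S" unfolding GSe using a[of "T * S"] STS S T by simp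
  have SGe: "S * G = S * T" unfolding G_def using a[of T] T by simp
  have GSG: "G * (S * G) = G" unfolding SGe
    unfolding G_def using assoc_mult_mat[OF T mult_carrier_mat[OF S T] mult_carrier_mat[OF S T]]
      assoc_mult_mat[OF S T mult_carrier_mat[OF S T]] a[of T] T by simp
  have GS: "G * S = S * G" unfolding GSe SGe using STS TS by simp
  define X where "X = G * transpose_mat M"
  have X: "X \<in> carrier_mat k m" unfolding X_def using G Mt by simp
  have fold: "\<And>(Z::real mat) q. Z \<in> carrier_mat k q \<Longrightarrow> transpose_mat M * (M * Z) = S * Z"
    unfolding S_def using M Mt by simp
  define D where "D = G * S - 1\<^sub>m k"
  have D: "D \<in> carrier_mat k k" unfolding D_def by (rule minus_carrier_mat) simp
  have SD: "S * D = 0\<^sub>m k k"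
  proof -
    have "S * D = S * (G * S) - S * 1\<^sub>m k"
      unfolding D_def by (rule mult_minus_distrib_mat[OF S mult_carrier_mat[OF G S] one_carrier_mat])
    thus ?thesis using SGS S by simp
  qed
  have MD: "M * D = 0\<^sub>m m k"
  proof (rule gram_zero)
    show "M * D \<in> carrier_mat m k" using M D by simp
    have "transpose_mat (M * D) * (M * D) = transpose_mat D * (transpose_mat M * (M * D))"
      using M D Mt by (simp add: transpose_mult[OF M D] assoc_mult_mat[of "transpose_mat D" k k "transpose_mat M" m "M * D" k])
    also have "\<dots> = 0\<^sub>m k k" using fold[OF D] SD D by simp
    finally show "transpose_mat (M * D) * (M * D) = 0\<^sub>m k k" .
  qed
  have MGS: "M * (G * S) = M"
  proof -
    have "M * D = M * (G * S) - M * 1\<^sub>m k"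
      unfolding D_def by (rule mult_minus_distrib_mat[OF M mult_carrier_mat[OF G S] one_carrier_mat])
    hence e: "M * (G * S) - M = 0\<^sub>m m k" using MD M by simp
    show ?thesis
    proof (rule eq_matI)
      fix i j assume "i < dim_row M" "j < dim_col M"
      thus "(M * (G * S)) $$ (i,j) = M $$ (i,j)"
        using arg_cong[OF e, of "\<lambda>A. A $$ (i,j)"] M G S by simp
    qed (use M G S in auto)
  qed
  have 1: "M * X * M = M"
  proof -
    have "M * X * M = M * (X * M)" using assoc_mult_mat[OF M X M] .
    also have "X * M = G * S" unfolding X_def S_def using assoc_mult_mat[OF G Mt M] .
    finally show ?thesis using MGS by simp
  qed
  have 2: "X * M * X = X"
  proof -
    have "X * M * X = X * (M * X)" using assoc_mult_mat[OF X M X] .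
    also have "\<dots> = G * (transpose_mat M * (M * X))" unfolding X_def
      using assoc_mult_mat[OF G Mt mult_carrier_mat[OF M X[unfolded X_def]]] .
    also have "\<dots> = G * (S * X)" using fold[OF X] by simp
    also have "\<dots> = (G * (S * G)) * transpose_mat M" unfolding X_def
      using assoc_mult_mat[OF S G Mt] assoc_mult_mat[OF G mult_carrier_mat[OF S G] Mt] by simp
    also have "\<dots> = X" unfolding X_def GSG ..
    finally show ?thesis .
  qed
  have 3: "transpose_mat (M * X) = M * X"
    unfolding X_def using M Mt G GT
    by (simp add: transpose_mult[OF M mult_carrier_mat[OF G Mt]] transpose_mult[OF G Mt] assoc_mult_mat[OF M G Mt])
  have 4: "transpose_mat (X * M) = X * M"
    unfolding X_def using M Mt G GT sym GS assoc_mult_mat[OF G Mt M]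
    by (simp add: transpose_mult[OF G S] transpose_mult[OF S G] S_def[symmetric])
  show ?thesis using X 1 2 3 4 by blast
qed

lemma assoc_dims: assumes "dim_col A = dim_row B" "dim_col B = dim_row C"
  shows "(A :: 'a :: semiring_0 mat) * B * C = A * (B * C)"
proof -
  have a: "A \<in> carrier_mat (dim_row A) (dim_row B)" using assms(1) unfolding carrier_mat_def by simp
  have b: "B \<in> carrier_mat (dim_row B) (dim_row C)" using assms(2) unfolding carrier_mat_def by simp
  have c: "C \<in> carrier_mat (dim_row C) (dim_col C)" unfolding carrier_mat_def by simp
  show ?thesis by (rule assoc_mult_mat[OF a b c])
qed

lemma penrose_unique:
  fixes M X Y :: "real mat"
  assumes M: "M \<in> carrier_mat m k" and X: "X \<in> carrier_mat k m" and Y: "Y \<in> carrier_mat k m"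
    and X1: "M * X * M = M" and X2: "X * M * X = X" and X3: "transpose_mat (M * X) = M * X" and X4: "transpose_mat (X * M) = X * M"
    and Y1: "M * Y * M = M" and Y2: "Y * M * Y = Y" and Y3: "transpose_mat (M * Y) = M * Y" and Y4: "transpose_mat (Y * M) = Y * M"
  shows "X = Y"
proof -
  have d: "dim_row M = m" "dim_col M = k" "dim_row X = k" "dim_col X = m" "dim_row Y = k" "dim_col Y = m"
    using M X Y by auto
  have tM: "transpose_mat (M * Y * M) = transpose_mat M * (M * Y)"
    using transpose_mult[OF mult_carrier_mat[OF M Y] M] Y3 by simp
  hence e1: "transpose_mat M = transpose_mat M * (M * Y)" unfolding Y1 .
  have tM2: "transpose_mat (M * X * M) = X * M * transpose_mat M"
    using transpose_mult[OF M mult_carrier_mat[OF X M]] X4 assoc_mult_mat[OF M X M] by simp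
  hence e2: "transpose_mat M = X * M * transpose_mat M" unfolding X1 .
  have t3: "transpose_mat X * transpose_mat M = M * X" by (metis X3 transpose_mult[OF M X])
  have t4: "transpose_mat M * transpose_mat Y = Y * M" by (metis Y4 transpose_mult[OF Y M])
  have "X = X * (M * X)" using X2 assoc_mult_mat[OF X M X] by simp
  also have "\<dots> = X * (transpose_mat X * transpose_mat M)" by (simp only: t3)
  also have "\<dots> = X * (transpose_mat X * (transpose_mat M * (M * Y)))"
    by (subst (1) e1) (rule refl)
  also have "\<dots> = X * ((transpose_mat X * transpose_mat M) * (M * Y))" using d by (simp add: assoc_dims)
  also have "\<dots> = X * (M * X * (M * Y))" by (simp only: t3)
  also have "\<dots> = (X * M * X) * (M * Y)" using d by (simp add: assoc_dims)
  also have "\<dots> = X * M * Y" using X2 d by (simp add: assoc_dims)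
  finally have ex: "X = X * M * Y" .
  have "Y = (Y * M) * Y" using Y2 by simp
  also have "\<dots> = transpose_mat M * transpose_mat Y * Y" by (simp only: t4)
  also have "\<dots> = X * M * transpose_mat M * transpose_mat Y * Y"
    by (subst (1) e2) (rule refl)
  also have "\<dots> = X * M * ((transpose_mat M * transpose_mat Y) * Y)" using d by (simp add: assoc_dims)
  also have "\<dots> = X * M * (Y * M * Y)" by (simp only: t4)
  also have "\<dots> = X * M * Y" using Y2 by simp
  finally show ?thesis using ex by simp
qed

lemma mp_inverse_props:
  fixes M :: "real mat"
  assumes M: "M \<in> carrier_mat m k"
  shows "mp_inverse M \<in> carrier_mat k m" "M * mp_inverse M * M = M"
proof -
  let ?P = "\<lambda>X. X \<in> carrier_mat (dim_col M) (dim_row M) \<and>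
     M * X * M = M \<and> X * M * X = X \<and>
     transpose_mat (M * X) = M * X \<and> transpose_mat (X * M) = X * M"
  have dm: "dim_col M = k" "dim_row M = m" using M by auto
  have ex1: "\<exists>!X. ?P X"
  proof -
    obtain X where "X \<in> carrier_mat k m" "M * X * M = M \<and> X * M * X = X \<and>
     transpose_mat (M * X) = M * X \<and> transpose_mat (X * M) = X * M" using penrose_exists[OF M] by blast
    hence PX: "?P X" using dm by simp
    show ?thesis
    proof (rule ex1I[of _ X])
      show "?P X" by (rule PX)
      fix Y assume "?P Y"
      thus "Y = X" using PX penrose_unique[OF M, of Y X] dm by auto
    qed
  qed
  have "?P (mp_inverse M)" unfolding mp_inverse_def by (rule theI'[OF ex1])
  thus "mp_inverse M \<in> carrier_mat k m" "M * mp_inverse M * M = M" using dm by auto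
qed



lemma sum_lessThan_add: "(\<Sum>x<m+k. f x) = (\<Sum>x<m. f x) + (\<Sum>r<k. f (m + r))" for f :: "nat \<Rightarrow> 'a::comm_monoid_add"
  by (induct k) (simp_all add: add.assoc)

lemma sum_split_mult: "(\<Sum>x<a*b. f x) = (\<Sum>q<a. \<Sum>r<b. f (q*b + r))" for f :: "nat \<Rightarrow> 'a::comm_monoid_add"
proof (induct a)
  case 0 then show ?case by simp
next
  case (Suc a)
  have "(\<Sum>x<Suc a * b. f x) = (\<Sum>x<a*b + b. f x)" by (simp add: add.commute)
  also have "\<dots> = (\<Sum>x<a*b. f x) + (\<Sum>r<b. f (a*b + r))" by (rule sum_lessThan_add)
  finally show ?case using Suc by simp
qed

lemma idx_bound: fixes s l j p i n :: nat shows "s < l \<Longrightarrow> j < p \<Longrightarrow> i < n \<Longrightarrow> s*(n*p) + j*n + i < l*(n*p)"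
proof -
  assume s: "s < l" and j: "j < p" and i: "i < n"
  have "j*n + i < j*n + n" using i by simp
  also have "\<dots> = (j+1)*n" by simp
  also have "\<dots> \<le> p*n" using j by (intro mult_right_mono) auto
  finally have a: "j*n+i < n*p" by (simp add: mult.commute)
  have "s*(n*p) + j*n + i < s*(n*p) + n*p" using a by simp
  also have "\<dots> = (s+1)*(n*p)" by simp
  also have "\<dots> \<le> l*(n*p)" using s by (intro mult_right_mono) auto
  finally show ?thesis .
qed

lemma qr_div: "r < b \<Longrightarrow> (q*b + r) div b = (q::nat)"
  by (simp add: add.commute)
lemma qr_mod: "r < b \<Longrightarrow> (q*b + r) mod b = (r::nat)"
  by (simp add: add.commute)

lemma idx_arith:
  fixes s j p i n :: nat
  assumes j: "j < p" and i: "i < n"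
  shows "(s*(n*p) + j*n + i) div n = s*p + j"
    "(s*(n*p) + j*n + i) mod n = i"
    "(s*(n*p) + j*n + i) div (n*p) = s"
    "(s*(n*p) + j*n + i) mod (n*p) = j*n + i"
    "(s*(n*p) + j*n + i) div (p*n) = s"
    "(s*(n*p) + j*n + i) mod (p*n) = j*n + i"
    "(j*n + i) div n = j" "(j*n + i) mod n = i"
    "(s*p + j) div p = s" "(s*p + j) mod p = j"
proof -
  have n: "n > 0" using i by simp
  have p: "p > 0" using j by simp
  have a: "j*n+i < n*p"
  proof -
    have "j*n + i < j*n + n" using i by simp
    also have "\<dots> = (j+1)*n" by simp
    also have "\<dots> \<le> p*n" using j by (intro mult_right_mono) auto
    finally show ?thesis by (simp add: mult.commute)
  qed
  have e: "s*(n*p) + j*n + i = (s*p + j)*n + i" by (simp add: algebra_simps)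
  show "(s*(n*p) + j*n + i) div n = s*p + j" unfolding e using i by simp
  show "(s*(n*p) + j*n + i) mod n = i" unfolding e using i by simp
  show "(s*(n*p) + j*n + i) div (n*p) = s" using qr_div[OF a, of s] by (simp add: add.assoc)
  show "(s*(n*p) + j*n + i) mod (n*p) = j*n + i" using qr_mod[OF a, of s] by (simp add: add.assoc)
  show "(s*(n*p) + j*n + i) div (p*n) = s" using qr_div[OF a, of s] by (simp add: add.assoc mult.commute[of p n])
  show "(s*(n*p) + j*n + i) mod (p*n) = j*n + i" using qr_mod[OF a, of s] by (simp add: add.assoc mult.commute[of p n])
  show "(j*n + i) div n = j" using i by simp
  show "(j*n + i) mod n = i" using i by simp
  show "(s*p + j) div p = s" using j by simp
  show "(s*p + j) mod p = j" using j by simp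
qed

lemma split3: "(\<Sum>C<l*(n*p). f C) = (\<Sum>t<l. \<Sum>v<p. \<Sum>u<n. f (t*(n*p) + v*n + u))"
  for f :: "nat \<Rightarrow> 'a::comm_monoid_add"
proof -
  have "(\<Sum>C<l*(n*p). f C) = (\<Sum>t<l. \<Sum>r<n*p. f (t*(n*p) + r))" by (rule sum_split_mult)
  also have "\<dots> = (\<Sum>t<l. \<Sum>v<p. \<Sum>u<n. f (t*(n*p) + (v*n + u)))"
    by (simp add: mult.commute[of n p] sum_split_mult)
  finally show ?thesis by (simp add: add.assoc)
qed

lemma split2: "(\<Sum>c<n*l. f c) = (\<Sum>t<l. \<Sum>u<n. f (t*n + u))"
  for f :: "nat \<Rightarrow> 'a::comm_monoid_add"
  using sum_split_mult[of f l n] by (simp add: mult.commute)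

lemma sb: fixes s l j p :: nat shows "s < l \<Longrightarrow> j < p \<Longrightarrow> s*p + j < p*l"
proof -
  assume s: "s < l" and j: "j < p"
  have "s*p + j < s*p + p" using j by simp
  also have "\<dots> = (s+1)*p" by simp
  also have "\<dots> \<le> l*p" using s by (intro mult_right_mono) auto
  finally show ?thesis by (simp add: mult.commute)
qed

lemma tensor_dims:
  assumes "is_tensor m k l T" "0 < l"
  shows "dim_row (T ! 0) = m" "dim_col (T ! 0) = k" "length T = l"
    "\<And>s. s < l \<Longrightarrow> dim_row (T ! s) = m" "\<And>s. s < l \<Longrightarrow> dim_col (T ! s) = k"
  using assms unfolding is_tensor_def by auto

lemma tvec_entry:
  assumes X: "is_tensor n p l X" and l: "0 < l" and s: "s < l" and j: "j < p" and i: "i < n"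
  shows "tvec X $ (s*(n*p) + j*n + i) = X ! s $$ (i, j)"
    "dim_vec (tvec X) = l * (n * p)"
  using idx_bound[OF s j i] idx_arith[OF j i] tensor_dims[OF X l]
  unfolding tvec_def Let_def by simp_all

lemma tprodAX_entry:
  assumes A: "is_tensor n n l A" and X: "is_tensor n p l X" and l: "0 < l"
    and s: "s < l" and j: "j < p" and i: "i < n"
  shows "tprod A X ! s $$ (i, j) = (\<Sum>t<l. \<Sum>u<n. A ! ((l + s - t) mod l) $$ (i, u) * X ! t $$ (u, j))"
proof -
  note dA = tensor_dims[OF A l] and dX = tensor_dims[OF X l]
  have b1: "s*n + i < n*l" using sb[OF s i] .
  have "tprod A X ! s $$ (i, j) = (bcirc A * unfold_t X) $$ (s*n + i, j)"
    unfolding tprod_def fold_t_def using s i j dA dX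
    by (simp add: unfold_t_def Let_def)
  also have "\<dots> = (\<Sum>c<n*l. bcirc A $$ (s*n+i, c) * unfold_t X $$ (c, j))"
    using b1 j dA dX by (simp add: bcirc_def unfold_t_def Let_def scalar_prod_def lessThan_atLeast0)
  also have "\<dots> = (\<Sum>t<l. \<Sum>u<n. bcirc A $$ (s*n+i, t*n+u) * unfold_t X $$ (t*n+u, j))"
    by (rule split2)
  also have "\<dots> = (\<Sum>t<l. \<Sum>u<n. A ! ((l + s - t) mod l) $$ (i, u) * X ! t $$ (u, j))"
  proof (intro sum.cong refl)
    fix t u assume t: "t \<in> {..<l}" and u: "u \<in> {..<n}"
    have b2: "t*n + u < n*l" using sb[of t l u n] t u by simp
    show "bcirc A $$ (s*n+i, t*n+u) * unfold_t X $$ (t*n+u, j) = A ! ((l + s - t) mod l) $$ (i, u) * X ! t $$ (u, j)"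
      using b1 b2 j i u dA dX qr_div[OF i, of s] qr_mod[OF i, of s] qr_div[of u n t] qr_mod[of u n t] u
      by (simp add: bcirc_def unfold_t_def Let_def)
  qed
  finally show ?thesis .
qed

lemma tprodXB_entry:
  assumes B: "is_tensor p p l B" and X: "is_tensor n p l X" and l: "0 < l"
    and s: "s < l" and j: "j < p" and i: "i < n"
  shows "tprod X B ! s $$ (i, j) = (\<Sum>t<l. \<Sum>v<p. X ! ((l + s - t) mod l) $$ (i, v) * B ! t $$ (v, j))"
proof -
  note dB = tensor_dims[OF B l] and dX = tensor_dims[OF X l]
  have b1: "s*n + i < n*l" using sb[OF s i] .
  have "tprod X B ! s $$ (i, j) = (bcirc X * unfold_t B) $$ (s*n + i, j)"
    unfolding tprod_def fold_t_def using s i j dB dX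
    by (simp add: unfold_t_def Let_def)
  also have "\<dots> = (\<Sum>c<p*l. bcirc X $$ (s*n+i, c) * unfold_t B $$ (c, j))"
    using b1 j dB dX by (simp add: bcirc_def unfold_t_def Let_def scalar_prod_def lessThan_atLeast0)
  also have "\<dots> = (\<Sum>t<l. \<Sum>v<p. bcirc X $$ (s*n+i, t*p+v) * unfold_t B $$ (t*p+v, j))"
    by (rule split2)
  also have "\<dots> = (\<Sum>t<l. \<Sum>v<p. X ! ((l + s - t) mod l) $$ (i, v) * B ! t $$ (v, j))"
  proof (intro sum.cong refl)
    fix t v assume t: "t \<in> {..<l}" and v: "v \<in> {..<p}"
    have b2: "t*p + v < p*l" using sb[of t l v p] t v by simp
    show "bcirc X $$ (s*n+i, t*p+v) * unfold_t B $$ (t*p+v, j) = X ! ((l + s - t) mod l) $$ (i, v) * B ! t $$ (v, j)"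
      using b1 b2 j i v dB dX qr_div[OF i, of s] qr_mod[OF i, of s] qr_div[of v p t] qr_mod[of v p t] v
      by (simp add: bcirc_def unfold_t_def Let_def)
  qed
  finally show ?thesis .
qed

lemma K_entry:
  assumes B: "is_tensor p p l B" and l: "0 < l" and s: "s < l" and t: "t < l"
    and j: "j < p" and v: "v < p" and i: "i < n" and u: "u < n"
  shows "kron (transpose_mat (bcirc_tilde B)) (1\<^sub>m n) $$ (s*(n*p)+j*n+i, t*(n*p)+v*n+u)
     = B ! ((l + s - t) mod l) $$ (v, j) * (if i = u then 1 else 0)"
proof -
  note dB = tensor_dims[OF B l]
  have bR: "s*(n*p)+j*n+i < p*l*n" using idx_bound[OF s j i] by (simp add: ac_simps)
  have bC: "t*(n*p)+v*n+u < p*l*n" using idx_bound[OF t v u] by (simp add: ac_simps)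
  have b1: "s*p+j < p*l" using sb[OF s j] .
  have b2: "t*p+v < p*l" using sb[OF t v] .
  note a1 = idx_arith[OF j i] and a2 = idx_arith[OF v u]
  show ?thesis
    using bR bC b1 b2 a1 a2 dB i u
    by (simp add: kron_def bcirc_tilde_def Let_def)
qed

lemma KR_entry:
  assumes A: "is_tensor n n l A" and l: "0 < l" and s: "s < l" and t: "t < l"
    and j: "j < p" and v: "v < p" and i: "i < n" and u: "u < n"
  shows "khatri_rao l p p n n (ones_block_id p l) (bcirc A) $$ (s*(n*p)+j*n+i, t*(n*p)+v*n+u)
     = (if j = v then 1 else 0) * A ! ((l + s - t) mod l) $$ (i, u)"
proof -
  note dA = tensor_dims[OF A l]
  have bR: "s*(n*p)+j*n+i < l*(p*n)" using idx_bound[OF s j i] by (simp add: ac_simps)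
  have bC: "t*(n*p)+v*n+u < l*(p*n)" using idx_bound[OF t v u] by (simp add: ac_simps)
  have b1: "s*p+j < p*l" using sb[OF s j] .
  have b2: "t*p+v < p*l" using sb[OF t v] .
  have b3: "s*n+i < n*l" using sb[OF s i] .
  have b4: "t*n+u < n*l" using sb[OF t u] .
  have jn: "j*n+i < p*n" using sb[OF j i] by (simp add: mult.commute)
  have vn: "v*n+u < p*n" using sb[OF v u] by (simp add: mult.commute)
  note a1 = idx_arith[OF j i] and a2 = idx_arith[OF v u]
  have e1: "(s*p+j) mod p = j" "(t*p+v) mod p = v" using j v qr_mod by auto
  have e2: "(s*n+i) div n = s" "(s*n+i) mod n = i" "(t*n+u) div n = t" "(t*n+u) mod n = u"
    using i u qr_mod qr_div by auto
  show ?thesis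
    using bR bC b1 b2 b3 b4 jn vn a1 a2 e1 e2 dA i u j v
    by (simp add: khatri_rao_def kron_def block_of_def ones_block_id_def bcirc_def Let_def)
qed

lemma reindex_circ:
  fixes g :: "nat \<Rightarrow> nat \<Rightarrow> 'a::comm_monoid_add"
  assumes s: "s < l"
  shows "(\<Sum>t<l. g ((l + s - t) mod l) t) = (\<Sum>t<l. g t ((l + s - t) mod l))"
proof -
  let ?f = "\<lambda>t. (l + s - t) mod l"
  have l: "0 < l" using s by simp
  have inv: "\<And>t. t < l \<Longrightarrow> ?f (?f t) = t"
  proof -
    fix t assume t: "t < l"
    show "?f (?f t) = t"
    proof (cases "t \<le> s")
      case True
      have "?f t = s - t"
      proof -
        have "l + s - t = (s - t) + 1 * l" using True by simp
        thus ?thesis using s by (simp only: mod_mult_self1) simp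
      qed
      thus ?thesis using True t s by simp
    next
      case False
      have "?f t = l + s - t" using False t by simp
      thus ?thesis using False t s by simp
    qed
  qed
  show ?thesis
    by (rule sum.reindex_bij_witness[where i = ?f and j = ?f]) (use inv l in auto)
qed

lemma delta_sum1: fixes n :: nat assumes "i < n" shows "(\<Sum>u<n. (c u * (if i = u then 1 else 0)) * g u) = c i * (g i :: real)"
proof -
  have "(\<Sum>u<n. (c u * (if i = u then 1 else 0)) * g u) = (\<Sum>u<n. if u = i then c i * g i else 0)"
    by (rule sum.cong) auto
  also have "\<dots> = (if i \<in> {..<n} then c i * g i else 0)" by (rule sum.delta) simp
  finally show ?thesis using assms by simp
qed
lemma delta_sum2: fixes p :: nat assumes "j < p" shows "(\<Sum>v<p. ((if j = v then 1 else 0) * c v) * g v) = c j * (g j :: real)"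
proof -
  have "(\<Sum>v<p. ((if j = v then 1 else 0) * c v) * g v) = (\<Sum>v<p. if v = j then c j * g j else 0)"
    by (rule sum.cong) auto
  also have "\<dots> = (if j \<in> {..<p} then c j * g j else 0)" by (rule sum.delta) simp
  finally show ?thesis using assms by simp
qed

lemma idx_decomp:
  fixes R n p l :: nat
  assumes R: "R < l*(n*p)"
  obtains s j i where "s < l" "j < p" "i < n" "R = s*(n*p) + j*n + i"
proof -
  have np: "0 < n*p" using R by (cases "n*p = 0") auto
  hence n: "0 < n" and p: "0 < p" by auto
  define s where "s = R div (n*p)"
  define r where "r = R mod (n*p)"
  define j where "j = r div n"
  define i where "i = r mod n"
  have "s < l" unfolding s_def using R np by (simp add: less_mult_imp_div_less)
  moreover have r: "r < n*p" unfolding r_def using np by simp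
  hence "j < p" unfolding j_def using n by (simp add: less_mult_imp_div_less mult.commute)
  moreover have "i < n" unfolding i_def using n by simp
  moreover have "R = s*(n*p) + j*n + i"
    unfolding s_def j_def i_def r_def by (simp add: add.assoc mult.commute)
  ultimately show ?thesis using that by blast
qed

lemma tadd_tensor:
  assumes A: "is_tensor n n l A" and B: "is_tensor p p l B" and X: "is_tensor n p l X" and l: "0 < l"
  shows "is_tensor n p l (tadd (tprod A X) (tprod X B))"
    "\<And>s. s < l \<Longrightarrow> tadd (tprod A X) (tprod X B) ! s = tprod A X ! s + tprod X B ! s"
    "\<And>s. s < l \<Longrightarrow> tprod X B ! s \<in> carrier_mat n p"
    "\<And>s. s < l \<Longrightarrow> tprod A X ! s \<in> carrier_mat n p"
proof -
  note dA = tensor_dims[OF A l] and dB = tensor_dims[OF B l] and dX = tensor_dims[OF X l]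
  have len: "length (tprod A X) = l" "length (tprod X B) = l"
    unfolding tprod_def fold_t_def using dA dX by auto
  show c1: "\<And>s. s < l \<Longrightarrow> tprod X B ! s \<in> carrier_mat n p"
    unfolding tprod_def fold_t_def using dB dX by (simp add: unfold_t_def Let_def)
  show c2: "\<And>s. s < l \<Longrightarrow> tprod A X ! s \<in> carrier_mat n p"
    unfolding tprod_def fold_t_def using dA dX by (simp add: unfold_t_def Let_def)
  show e: "\<And>s. s < l \<Longrightarrow> tadd (tprod A X) (tprod X B) ! s = tprod A X ! s + tprod X B ! s"
    unfolding tadd_def using len by simp
  show "is_tensor n p l (tadd (tprod A X) (tprod X B))"
    unfolding is_tensor_def using len e c1 by (auto simp: tadd_def)
qed

lemma L_tvec:
  assumes A: "is_tensor n n l A" and B: "is_tensor p p l B" and X: "is_tensor n p l X" and l: "0 < l"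
  shows "(kron (transpose_mat (bcirc_tilde B)) (1\<^sub>m n) + khatri_rao l p p n n (ones_block_id p l) (bcirc A))
     *\<^sub>v tvec X = tvec (tadd (tprod A X) (tprod X B))"
proof -
  let ?K = "kron (transpose_mat (bcirc_tilde B)) (1\<^sub>m n)"
  let ?KR = "khatri_rao l p p n n (ones_block_id p l) (bcirc A)"
  let ?L = "?K + ?KR"
  let ?Z = "tadd (tprod A X) (tprod X B)"
  note dA = tensor_dims[OF A l] and dB = tensor_dims[OF B l] and dX = tensor_dims[OF X l]
  have Zt: "is_tensor n p l ?Z" by (rule tadd_tensor(1)[OF A B X l])
  have dL: "dim_row ?L = l*(n*p)" "dim_col ?L = l*(n*p)"
    by (simp_all add: khatri_rao_def ac_simps)
  have dvX: "dim_vec (tvec X) = l*(n*p)" using dX unfolding tvec_def Let_def by simp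
  have dvZ: "dim_vec (tvec ?Z) = l*(n*p)" using tensor_dims[OF Zt l] unfolding tvec_def Let_def by simp
  show ?thesis
  proof (rule eq_vecI)
    show "dim_vec (?L *\<^sub>v tvec X) = dim_vec (tvec ?Z)" using dL dvZ by simp
    fix R assume "R < dim_vec (tvec ?Z)"
    hence R: "R < l*(n*p)" using dvZ by simp
    then obtain s j i where s: "s < l" and j: "j < p" and i: "i < n" and Re: "R = s*(n*p) + j*n + i"
      by (rule idx_decomp)
    let ?st = "\<lambda>t. (l + s - t) mod l"
    have "(?L *\<^sub>v tvec X) $ R = (\<Sum>C<l*(n*p). ?L $$ (R, C) * tvec X $ C)"
      using R dL dvX by (simp add: scalar_prod_def lessThan_atLeast0)
    also have "\<dots> = (\<Sum>t<l. \<Sum>v<p. \<Sum>u<n. ?L $$ (R, t*(n*p)+v*n+u) * tvec X $ (t*(n*p)+v*n+u))"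
      by (rule split3)
    also have "\<dots> = (\<Sum>t<l. (\<Sum>v<p. B ! ?st t $$ (v, j) * X ! t $$ (i, v))
                     + (\<Sum>u<n. A ! ?st t $$ (i, u) * X ! t $$ (u, j)))"
    proof (rule sum.cong[OF refl])
      fix t assume t: "t \<in> {..<l}"
      hence t: "t < l" by simp
      have "(\<Sum>v<p. \<Sum>u<n. ?L $$ (R, t*(n*p)+v*n+u) * tvec X $ (t*(n*p)+v*n+u))
         = (\<Sum>v<p. \<Sum>u<n. (B ! ?st t $$ (v, j) * (if i = u then 1 else 0)) * X ! t $$ (u, v)
                         + ((if j = v then 1 else 0) * A ! ?st t $$ (i, u)) * X ! t $$ (u, v))"
      proof (intro sum.cong refl)
        fix v u assume v: "v \<in> {..<p}" and u: "u \<in> {..<n}"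
        hence v: "v < p" and u: "u < n" by auto
        have bC: "t*(n*p)+v*n+u < l*(n*p)" by (rule idx_bound[OF t v u])
        have "?L $$ (R, t*(n*p)+v*n+u) = ?K $$ (R, t*(n*p)+v*n+u) + ?KR $$ (R, t*(n*p)+v*n+u)"
          using R bC by (simp add: khatri_rao_def ac_simps)
        also have "\<dots> = B ! ?st t $$ (v, j) * (if i = u then 1 else 0) + (if j = v then 1 else 0) * A ! ?st t $$ (i, u)"
          unfolding Re K_entry[OF B l s t j v i u] KR_entry[OF A l s t j v i u] ..
        finally show "?L $$ (R, t*(n*p)+v*n+u) * tvec X $ (t*(n*p)+v*n+u)
           = (B ! ?st t $$ (v, j) * (if i = u then 1 else 0)) * X ! t $$ (u, v)
                         + ((if j = v then 1 else 0) * A ! ?st t $$ (i, u)) * X ! t $$ (u, v)"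
          using tvec_entry(1)[OF X l t v u] by (simp add: distrib_right)
      qed
      also have "\<dots> = (\<Sum>v<p. \<Sum>u<n. (B ! ?st t $$ (v, j) * (if i = u then 1 else 0)) * X ! t $$ (u, v)) +
                      (\<Sum>u<n. \<Sum>v<p. ((if j = v then 1 else 0) * A ! ?st t $$ (i, u)) * X ! t $$ (u, v))"
        by (simp add: sum.distrib sum.swap[of _ "{..<n}" "{..<p}"])
      also have "\<dots> = (\<Sum>v<p. B ! ?st t $$ (v, j) * X ! t $$ (i, v))
                     + (\<Sum>u<n. A ! ?st t $$ (i, u) * X ! t $$ (u, j))"
        using delta_sum1[OF i] delta_sum2[OF j] by simp
      finally show "(\<Sum>v<p. \<Sum>u<n. ?L $$ (R, t*(n*p)+v*n+u) * tvec X $ (t*(n*p)+v*n+u))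
         = (\<Sum>v<p. B ! ?st t $$ (v, j) * X ! t $$ (i, v))
                     + (\<Sum>u<n. A ! ?st t $$ (i, u) * X ! t $$ (u, j))" .
    qed
    also have "\<dots> = (\<Sum>t<l. \<Sum>v<p. B ! ?st t $$ (v, j) * X ! t $$ (i, v))
                  + (\<Sum>t<l. \<Sum>u<n. A ! ?st t $$ (i, u) * X ! t $$ (u, j))"
      by (rule sum.distrib)
    also have "(\<Sum>t<l. \<Sum>v<p. B ! ?st t $$ (v, j) * X ! t $$ (i, v))
             = (\<Sum>t<l. \<Sum>v<p. X ! ?st t $$ (i, v) * B ! t $$ (v, j))"
      using reindex_circ[OF s, of "\<lambda>a b. \<Sum>v<p. X ! a $$ (i, v) * B ! b $$ (v, j)"]
      by (simp add: mult.commute)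
    also have "(\<Sum>t<l. \<Sum>v<p. X ! ?st t $$ (i, v) * B ! t $$ (v, j))
                  + (\<Sum>t<l. \<Sum>u<n. A ! ?st t $$ (i, u) * X ! t $$ (u, j))
             = tprod X B ! s $$ (i, j) + tprod A X ! s $$ (i, j)"
      unfolding tprodAX_entry[OF A X l s j i] tprodXB_entry[OF B X l s j i] ..
    also have "\<dots> = ?Z ! s $$ (i, j)"
      using tadd_tensor(2-4)[OF A B X l s] i j by simp
    also have "\<dots> = tvec ?Z $ R" unfolding Re by (rule tvec_entry(1)[OF Zt l s j i, symmetric])
    finally show "(?L *\<^sub>v tvec X) $ R = tvec ?Z $ R" .
  qed
qed

lemma tvec_dim: assumes X: "is_tensor n p l X" and l: "0 < l" shows "dim_vec (tvec X) = l*(n*p)"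
  using tensor_dims[OF X l] unfolding tvec_def Let_def by simp

lemma tvec_inj:
  assumes X: "is_tensor n p l X" and Y: "is_tensor n p l Y" and l: "0 < l" and e: "tvec X = tvec Y"
  shows "X = Y"
proof (rule nth_equalityI)
  show "length X = length Y" using X Y unfolding is_tensor_def by simp
  fix s assume "s < length X"
  hence s: "s < l" using X unfolding is_tensor_def by simp
  have cX: "X ! s \<in> carrier_mat n p" and cY: "Y ! s \<in> carrier_mat n p"
    using X Y s unfolding is_tensor_def by auto
  show "X ! s = Y ! s"
  proof (rule eq_matI)
    fix i j assume "i < dim_row (Y ! s)" "j < dim_col (Y ! s)"
    hence i: "i < n" and j: "j < p" using cY by auto
    show "X ! s $$ (i, j) = Y ! s $$ (i, j)"
      using tvec_entry(1)[OF X l s j i] tvec_entry(1)[OF Y l s j i] e by simp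
  qed (use cX cY in auto)
qed

lemma tensorize:
  assumes v: "v \<in> carrier_vec (l*(n*p))" and l: "0 < l"
  shows "\<exists>Y. is_tensor n p l Y \<and> tvec Y = v"
proof -
  define Y where "Y = map (\<lambda>s. mat n p (\<lambda>(i,j). v $ (s*(n*p)+j*n+i))) [0..<l]"
  have Yt: "is_tensor n p l Y" unfolding Y_def is_tensor_def by simp
  have "tvec Y = v"
  proof (rule eq_vecI)
    show "dim_vec (tvec Y) = dim_vec v" using tensor_dims[OF Yt l] v unfolding tvec_def Let_def by simp
    fix R assume "R < dim_vec v"
    hence R: "R < l*(n*p)" using v by simp
    then obtain s j i where s: "s < l" and j: "j < p" and i: "i < n" and Re: "R = s*(n*p) + j*n + i"
      by (rule idx_decomp)
    show "tvec Y $ R = v $ R" unfolding Re tvec_entry(1)[OF Yt l s j i] using s i j unfolding Y_def by simp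
  qed
  thus ?thesis using Yt by blast
qed

theorem mainTheorem19:
  fixes A B C :: tensor and n p l :: nat
  assumes "0 < l"
    and "is_tensor n n l A" and "is_tensor p p l B" and "is_tensor n p l C"
    and "\<exists>X. is_tensor n p l X \<and> tadd (tprod A X) (tprod X B) = C"
  shows "\<exists>X. is_tensor n p l X \<and>
           tvec X = mp_inverse (kron (transpose_mat (bcirc_tilde B)) (1\<^sub>m n)
                        + khatri_rao l p p n n (ones_block_id p l) (bcirc A)) *\<^sub>v tvec C \<and>
           tadd (tprod A X) (tprod X B) = C"
proof -
  note l = assms(1) and A = assms(2) and B = assms(3) and Ct = assms(4)
  obtain X0 where X0: "is_tensor n p l X0" and X0e: "tadd (tprod A X0) (tprod X0 B) = C"
    using assms(5) by blast
  define L where "L = kron (transpose_mat (bcirc_tilde B)) (1\<^sub>m n)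
                        + khatri_rao l p p n n (ones_block_id p l) (bcirc A)"
  have Lc: "L \<in> carrier_mat (l*(n*p)) (l*(n*p))"
    unfolding L_def by (rule carrier_matI) (simp_all add: khatri_rao_def ac_simps)
  note P = mp_inverse_props[OF Lc]
  have cC: "tvec C \<in> carrier_vec (l*(n*p))"
    by (rule carrier_vecI, rule tvec_dim[OF Ct l])
  have cX0: "tvec X0 \<in> carrier_vec (l*(n*p))"
    by (rule carrier_vecI, rule tvec_dim[OF X0 l])
  have w: "mp_inverse L *\<^sub>v tvec C \<in> carrier_vec (l*(n*p))" by (rule mult_mat_vec_carrier[OF P(1) cC])
  obtain Y where Y: "is_tensor n p l Y" and Ye: "tvec Y = mp_inverse L *\<^sub>v tvec C"
    using tensorize[OF w l] by blast
  have LX0: "L *\<^sub>v tvec X0 = tvec C" unfolding L_def X0e[symmetric] by (rule L_tvec[OF A B X0 l])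
  have "tvec (tadd (tprod A Y) (tprod Y B)) = L *\<^sub>v tvec Y" unfolding L_def by (rule L_tvec[OF A B Y l, symmetric])
  also have "\<dots> = L *\<^sub>v (mp_inverse L *\<^sub>v (L *\<^sub>v tvec X0))" unfolding Ye LX0 ..
  also have "\<dots> = (L * mp_inverse L * L) *\<^sub>v tvec X0"
    by (simp only: assoc_mult_mat_vec[OF mult_carrier_mat[OF Lc P(1)] Lc cX0]
      assoc_mult_mat_vec[OF Lc P(1) mult_mat_vec_carrier[OF Lc cX0]])
  also have "\<dots> = tvec C" unfolding P(2) by (rule LX0)
  finally have tz: "tvec (tadd (tprod A Y) (tprod Y B)) = tvec C" .
  have eq: "tadd (tprod A Y) (tprod Y B) = C"
    by (rule tvec_inj[OF tadd_tensor(1)[OF A B Y l] Ct l tz])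
  show ?thesis
    by (rule exI[of _ Y]) (use Y Ye eq in \<open>simp add: L_def\<close>)
qed


end
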